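(* Let $n\ge 2$ and let $p_1,\dots,p_r$ be all the primes $p$ satisfying $p^{\acute v_p(n)}<\frac n2$. Then the number of vertices of full degree in $D_n$ is $$F(D_n)=n-\sum_{1\le i\le r}\left\lfloor\frac{n}{p_i^{\acute v_{p_i}(n)}}\right\rfloor+\sum_{1\le i<j\le r}\left\lfloor\frac{n}{p_i^{\acute v_{p_i}(n)}p_j^{\acute v_{p_j}(n)}}\right\rfloor-\cdots+(-1)^r\left\lfloor\frac{n}{\prod_{i=1}^r p_i^{\acute v_{p_i}(n)}}\right\rfloor.$$
   Context: $D_n$ is the graph with vertex set $\{1,\dots,n\}$ in which distinct $a,b$ are adjacent iff $\gcd(a,b)\mid n$ (the maximal Diophantine graph of order $n$). For a prime $p$, $v_p(n)$ is the exponent of $p$ in $n$ and $\acute v_p(n):=v_p(n)+1$. For a graph $G$ of order $n$, $F(G)$ is the number of vertices of degree $n-1$. *)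

theory Defs
  imports Complex_Main "HOL-Computational_Algebra.Primes"
begin

definition D_adj :: "nat \<Rightarrow> nat \<Rightarrow> nat \<Rightarrow> bool" where
  "D_adj n a b \<longleftrightarrow> a \<in> {1..n} \<and> b \<in> {1..n} \<and> a \<noteq> b \<and> gcd a b dvd n"

definition D_degree :: "nat \<Rightarrow> nat \<Rightarrow> nat" where
  "D_degree n a = card {b \<in> {1..n}. D_adj n a b}"

definition F_D :: "nat \<Rightarrow> nat" where
  "F_D n = card {a \<in> {1..n}. D_degree n a = n - 1}"

definition vacute :: "nat \<Rightarrow> nat \<Rightarrow> nat" where
  "vacute p n = multiplicity p n + 1"

end

theory Submission
  imports Defs
begin

lemma incl_excl:
  fixes Q :: "'p \<Rightarrow> 'a \<Rightarrow> bool"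
  assumes "finite P" "finite A"
  shows "int (card {a\<in>A. \<forall>p\<in>P. \<not> Q p a}) =
    (\<Sum>S\<in>Pow P. (-1) ^ card S * int (card {a\<in>A. \<forall>p\<in>S. Q p a}))"
  using assms
proof (induction P arbitrary: A rule: finite_induct)
  case empty thus ?case by simp
next
  case (insert x P)
  let ?B = "{a\<in>A. Q x a}"
  have fB: "finite ?B" using insert.prems by simp
  have split: "{a\<in>A. \<forall>p\<in>P. \<not> Q p a} = {a\<in>A. \<forall>p\<in>insert x P. \<not> Q p a} \<union> {a\<in>?B. \<forall>p\<in>P. \<not> Q p a}"
    by auto
  have "card {a\<in>A. \<forall>p\<in>P. \<not> Q p a} = card {a\<in>A. \<forall>p\<in>insert x P. \<not> Q p a} + card {a\<in>?B. \<forall>p\<in>P. \<not> Q p a}"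
    unfolding split by (rule card_Un_disjoint) (use insert.prems in auto)
  hence c: "int (card {a\<in>A. \<forall>p\<in>insert x P. \<not> Q p a}) = int (card {a\<in>A. \<forall>p\<in>P. \<not> Q p a}) - int (card {a\<in>?B. \<forall>p\<in>P. \<not> Q p a})"
    by simp
  have "(\<Sum>S\<in>Pow (insert x P). (-1) ^ card S * int (card {a\<in>A. \<forall>p\<in>S. Q p a})) =
        (\<Sum>S\<in>Pow P. (-1) ^ card S * int (card {a\<in>A. \<forall>p\<in>S. Q p a})) +
        (\<Sum>S\<in>insert x ` Pow P. (-1) ^ card S * int (card {a\<in>A. \<forall>p\<in>S. Q p a}))"
    unfolding Pow_insert by (rule sum.union_disjoint) (use insert.hyps in auto)
  also have "(\<Sum>S\<in>insert x ` Pow P. (-1) ^ card S * int (card {a\<in>A. \<forall>p\<in>S. Q p a}))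
     = (\<Sum>S\<in>Pow P. (-1) ^ card (insert x S) * int (card {a\<in>A. \<forall>p\<in>insert x S. Q p a}))"
  proof (rule sum.reindex_cong[of "insert x"])
    show "inj_on (insert x) (Pow P)" using insert.hyps
      by (smt (verit, ccfv_SIG) PowD inj_on_def insert_ident subset_iff)
  qed auto
  also have "\<dots> = (\<Sum>S\<in>Pow P. - ((-1) ^ card S * int (card {a\<in>?B. \<forall>p\<in>S. Q p a})))"
  proof (rule sum.cong)
    fix S assume S: "S \<in> Pow P"
    hence "finite S" "x \<notin> S" using insert.hyps finite_subset by auto
    hence "card (insert x S) = Suc (card S)" by simp
    moreover have "{a\<in>A. \<forall>p\<in>insert x S. Q p a} = {a\<in>?B. \<forall>p\<in>S. Q p a}" by auto
    ultimately show "(-1) ^ card (insert x S) * int (card {a\<in>A. \<forall>p\<in>insert x S. Q p a}) =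
        - ((-1) ^ card S * int (card {a\<in>?B. \<forall>p\<in>S. Q p a}))" by simp
  qed simp
  finally show ?case using c insert.IH[OF insert.prems] insert.IH[OF fB]
    by (simp add: sum_negf)
qed

lemma card_mult:
  fixes d n :: nat assumes "d > 0"
  shows "card {a\<in>{1..n}. d dvd a} = n div d"
proof -
  have "{a\<in>{1..n}. d dvd a} = (\<lambda>k. d*k) ` {1..n div d}"
  proof (rule set_eqI, rule iffI)
    fix a assume "a \<in> {a\<in>{1..n}. d dvd a}"
    then obtain k where a: "a = d*k" "1 \<le> a" "a \<le> n" by auto
    hence "k \<ge> 1" by (cases k) auto
    moreover have "k \<le> n div d" using a assms
      by (metis div_le_mono nonzero_mult_div_cancel_left not_gr0)
    ultimately show "a \<in> (\<lambda>k. d*k) ` {1..n div d}" using a by auto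
  next
    fix a assume "a \<in> (\<lambda>k. d*k) ` {1..n div d}"
    then obtain k where k0: "k \<in> {1..n div d}" "a = d*k" by blast
    hence k: "a = d*k" "1 \<le> k" "k \<le> n div d" by auto
    have "d*k \<le> d*(n div d)" using k by simp
    also have "\<dots> \<le> n" by simp
    finally show "a \<in> {a\<in>{1..n}. d dvd a}" using k assms by auto
  qed
  moreover have "inj_on (\<lambda>k. d*k) {1..n div d}" using assms by (auto simp: inj_on_def)
  ultimately show ?thesis by (simp add: card_image)
qed

lemma prod_dvd_iff:
  fixes q :: "nat \<Rightarrow> nat" and e :: "nat \<Rightarrow> nat"
  assumes "finite S" "\<forall>p\<in>S. prime p"
  shows "(\<Prod>p\<in>S. p ^ e p) dvd a \<longleftrightarrow> (\<forall>p\<in>S. p ^ e p dvd a)"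
  using assms
proof (induction S rule: finite_induct)
  case empty thus ?case by simp
next
  case (insert x S)
  have "coprime (x ^ e x) (\<Prod>p\<in>S. p ^ e p)"
  proof (rule prod_coprime_right)
    fix p assume "p \<in> S"
    hence "coprime x p" using insert by (metis insert_iff primes_coprime)
    thus "coprime (x ^ e x) (p ^ e p)" by simp
  qed
  thus ?case using insert
    by (auto simp: divides_mult dest: dvd_mult_left dvd_mult_right)
qed

lemma not_dvd_n:
  fixes p n :: nat assumes "prime p" "n > 0"
  shows "\<not> p ^ vacute p n dvd n"
proof
  assume d: "p ^ vacute p n dvd n"
  have nz: "n \<noteq> 0" using assms by simp
  have nu: "\<not> is_unit p" using prime_gt_1_nat[OF assms(1)] by simp
  have "vacute p n \<le> multiplicity p n" by (rule multiplicity_geI[OF nz nu d])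
  thus False by (simp add: vacute_def)
qed

lemma full_iff:
  assumes "a \<in> {1..n}"
  shows "D_degree n a = n - 1 \<longleftrightarrow> (\<forall>b\<in>{1..n}. b \<noteq> a \<longrightarrow> gcd a b dvd n)"
proof -
  let ?N = "{b\<in>{1..n}. D_adj n a b}"
  have sub: "?N \<subseteq> {1..n} - {a}" by (auto simp: D_adj_def)
  have cardM: "card ({1..n} - {a}) = n - 1" using assms by simp
  show ?thesis
  proof
    assume "D_degree n a = n - 1"
    hence "card ?N = card ({1..n} - {a})" using cardM by (simp add: D_degree_def)
    hence "?N = {1..n} - {a}" using sub by (intro card_subset_eq) auto
    thus "\<forall>b\<in>{1..n}. b \<noteq> a \<longrightarrow> gcd a b dvd n" by (auto simp: D_adj_def)
  next
    assume "\<forall>b\<in>{1..n}. b \<noteq> a \<longrightarrow> gcd a b dvd n"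
    hence "{1..n} - {a} \<subseteq> ?N" using assms by (auto simp: D_adj_def)
    hence "?N = {1..n} - {a}" using sub by (rule subset_antisym[rotated])
    thus "D_degree n a = n - 1" using cardM by (simp add: D_degree_def)
  qed
qed

lemma char_iff:
  fixes n a :: nat
  assumes n: "n \<ge> 2" and a: "a \<in> {1..n}"
  defines "P \<equiv> {p :: nat. prime p \<and> real (p ^ vacute p n) < real n / 2}"
  shows "(\<forall>b\<in>{1..n}. b \<noteq> a \<longrightarrow> gcd a b dvd n) \<longleftrightarrow> (\<forall>p\<in>P. \<not> p ^ vacute p n dvd a)"
proof
  assume H: "\<forall>b\<in>{1..n}. b \<noteq> a \<longrightarrow> gcd a b dvd n"
  show "\<forall>p\<in>P. \<not> p ^ vacute p n dvd a"
  proof (intro ballI notI)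
    fix p assume p: "p \<in> P" and qa: "p ^ vacute p n dvd a"
    define q where "q = p ^ vacute p n"
    have pr: "prime p" using p by (simp add: P_def)
    have q0: "q > 0" using pr by (simp add: q_def prime_gt_0_nat)
    have "real q < real n / 2" using p by (simp add: P_def q_def)
    hence q2: "2*q < n" by linarith
    define b where "b = (if a = q then 2*q else q)"
    have b: "b \<in> {1..n}" "b \<noteq> a" "q dvd b" using q0 q2 by (auto simp: b_def)
    have "q dvd gcd a b" using qa b by (simp add: q_def)
    hence "q dvd n" using H b by (meson dvd_trans)
    thus False using not_dvd_n[OF pr] n by (simp add: q_def)
  qed
next
  assume K: "\<forall>p\<in>P. \<not> p ^ vacute p n dvd a"
  show "\<forall>b\<in>{1..n}. b \<noteq> a \<longrightarrow> gcd a b dvd n"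
  proof (intro ballI impI; rule ccontr)
    fix b assume b: "b \<in> {1..n}" "b \<noteq> a" and nd: "\<not> gcd a b dvd n"
    have g0: "gcd a b \<noteq> 0" using a by auto
    obtain p where pr: "prime p" and m: "multiplicity p (gcd a b) > multiplicity p n"
      using multiplicity_le_imp_dvd[OF g0, of n] nd by (meson not_le)
    define q where "q = p ^ vacute p n"
    have "q dvd gcd a b" unfolding q_def vacute_def using m by (intro multiplicity_dvd') simp
    hence qa: "q dvd a" and qb: "q dvd b" by auto
    obtain i where i: "a = q*i" using qa by blast
    obtain j where j: "b = q*j" using qb by blast
    have "i \<ge> 1" "j \<ge> 1" using i j a b by (auto intro: Suc_leI simp: gr0I)
    moreover have "i \<noteq> j" using i j b by auto
    ultimately have "i \<ge> 2 \<or> j \<ge> 2" by linarith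
    hence "q*2 \<le> n"
    proof
      assume "i \<ge> 2" hence "q*2 \<le> q*i" by simp
      moreover have "q*i \<le> n" using i a by simp
      ultimately show ?thesis by linarith
    next
      assume "j \<ge> 2" hence "q*2 \<le> q*j" by simp
      moreover have "q*j \<le> n" using j b by simp
      ultimately show ?thesis by linarith
    qed
    moreover have "q*2 \<noteq> n"
    proof
      assume "q*2 = n" hence "q dvd n" by (metis dvd_triv_left)
      thus False using not_dvd_n[OF pr, of n] n by (simp add: q_def)
    qed
    ultimately have "2*q < n" by linarith
    hence "real q < real n / 2" by linarith
    hence "p \<in> P" using pr by (simp add: P_def q_def)
    thus False using K qa by (simp add: q_def)
  qed
qed

theorem mainTheorem5:
  fixes n :: nat
  assumes "n \<ge> 2"
  defines "P \<equiv> {p :: nat. prime p \<and> real (p ^ vacute p n) < real n / 2}"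
  shows "int (F_D n) =
    (\<Sum>S\<in>Pow P. (-1) ^ card S * int (n div (\<Prod>p\<in>S. p ^ vacute p n)))"
proof -
  have fP: "finite P"
  proof (rule finite_subset)
    show "P \<subseteq> {..n}"
    proof
      fix p assume "p \<in> P"
      hence pr: "prime p" and lt: "real (p ^ vacute p n) < real n / 2" by (auto simp: P_def)
      have "p ^ 1 \<le> p ^ vacute p n" using prime_gt_0_nat[OF pr]
        by (intro power_increasing) (auto simp: vacute_def)
      hence "p \<le> p ^ vacute p n" by simp
      moreover have "real (p ^ vacute p n) < real n" using lt by linarith
      hence "p ^ vacute p n < n" by linarith
      ultimately show "p \<in> {..n}" by simp
    qed
  qed simp
  have "{a\<in>{1..n}. D_degree n a = n - 1} = {a\<in>{1..n}. \<forall>p\<in>P. \<not> p ^ vacute p n dvd a}"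
  proof (rule Collect_cong)
    fix a show "(a \<in> {1..n} \<and> D_degree n a = n - 1) = (a \<in> {1..n} \<and> (\<forall>p\<in>P. \<not> p ^ vacute p n dvd a))"
      using full_iff[of a n] char_iff[OF assms(1), of a] unfolding P_def by blast
  qed
  hence "int (F_D n) = int (card {a\<in>{1..n}. \<forall>p\<in>P. \<not> p ^ vacute p n dvd a})"
    by (simp add: F_D_def)
  also have "\<dots> = (\<Sum>S\<in>Pow P. (-1) ^ card S * int (card {a\<in>{1..n}. \<forall>p\<in>S. p ^ vacute p n dvd a}))"
    by (rule incl_excl[OF fP]) simp
  also have "\<dots> = (\<Sum>S\<in>Pow P. (-1) ^ card S * int (n div (\<Prod>p\<in>S. p ^ vacute p n)))"
  proof (rule sum.cong)
    fix S assume S: "S \<in> Pow P"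
    hence fS: "finite S" and pS: "\<forall>p\<in>S. prime p" using fP finite_subset by (auto simp: P_def)
    have eq: "{a\<in>{1..n}. \<forall>p\<in>S. p ^ vacute p n dvd a} = {a\<in>{1..n}. (\<Prod>p\<in>S. p ^ vacute p n) dvd a}"
      using prod_dvd_iff[OF fS pS, of "\<lambda>p. vacute p n"] by auto
    have pos: "(\<Prod>p\<in>S. p ^ vacute p n) > 0" using pS
      by (simp add: prime_gt_0_nat prod_pos)
    have "card {a\<in>{1..n}. \<forall>p\<in>S. p ^ vacute p n dvd a} = n div (\<Prod>p\<in>S. p ^ vacute p n)"
      unfolding eq by (rule card_mult[OF pos])
    thus "(-1) ^ card S * int (card {a\<in>{1..n}. \<forall>p\<in>S. p ^ vacute p n dvd a}) =
       (-1) ^ card S * int (n div (\<Prod>p\<in>S. p ^ vacute p n))" by simp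
  qed simp
  finally show ?thesis .
qed

end
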